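(* Let $D$ be a pre-divergence on a Polish space $\mathcal{X}$, $c$ a cost function, and $\mu\in\mathcal{P}(\mathcal{X})$ such that (1) $P\mapsto D(P\|\mu)$ is lower semicontinuous and has compact sublevel sets, and (2) $c(x_1,x_2)=0$ if and only if $x_1=x_2$. For $r>0$ let $c_r=rc$. Then for every $\nu\in\mathcal{P}(\mathcal{X})$, \[\lim_{r\to\infty}D^{c_r}(\nu\|\mu)=D(\nu\|\mu).\]
   Context: $\mathcal{P}(\mathcal{X})$ is the set of Borel probability measures on the Polish space $\mathcal{X}$ with the weak topology. A pre-divergence is $D:\mathcal{P}(\mathcal{X})\times\mathcal{P}(\mathcal{X})\to[0,\infty]$ with $D(\mu\|\mu)=0$ for all $\mu$. A cost function is a lower semicontinuous $c:\mathcal{X}\times\mathcal{X}\to[0,\infty]$, with OT cost $C(\mu,\nu)=\inf\{\int c\,d\pi:\pi_1=\mu,\pi_2=\nu\}$. For a cost function $c'$ with OT cost $C'$, $D^{c'}(\nu\|\mu)=\inf_{\eta\in\mathcal{P}(\mathcal{X})}\{D(\eta\|\mu)+C'(\eta,\nu)\}$. *)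

theory Defs
  imports "HOL-Analysis.Analysis" "HOL-Probability.Probability"
begin

definition Prob :: "'a::topological_space measure set" where
  "Prob = {M. sets M = sets borel \<and> prob_space M}"

definition weak_top :: "'a::topological_space measure topology" where
  "weak_top = subtopology
     (topology_generated_by
        {{P. (\<integral>x. f x \<partial>P) \<in> U} | f U. continuous_on UNIV (f :: 'a \<Rightarrow> real) \<and> bounded (range f) \<and> open U})
     Prob"

definition lsc_on :: "'b topology \<Rightarrow> ('b \<Rightarrow> ennreal) \<Rightarrow> bool" where
  "lsc_on T F \<longleftrightarrow> (\<forall>a. openin T {x \<in> topspace T. a < F x})"

definition pre_divergence :: "('a::topological_space measure \<Rightarrow> 'a measure \<Rightarrow> ennreal) \<Rightarrow> bool" where
  "pre_divergence D \<longleftrightarrow> (\<forall>\<mu>\<in>Prob. D \<mu> \<mu> = 0)"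

definition cost_function :: "('a::topological_space \<Rightarrow> 'a \<Rightarrow> ennreal) \<Rightarrow> bool" where
  "cost_function c \<longleftrightarrow> (\<forall>a. open {z. a < c (fst z) (snd z)})"

definition couplings :: "'a::topological_space measure \<Rightarrow> 'a measure \<Rightarrow> ('a \<times> 'a) measure set" where
  "couplings \<mu> \<nu> = {\<pi>. sets \<pi> = sets (borel :: ('a \<times> 'a) measure) \<and> prob_space \<pi> \<and>
       distr \<pi> borel fst = \<mu> \<and> distr \<pi> borel snd = \<nu>}"

definition OT_cost :: "('a::topological_space \<Rightarrow> 'a \<Rightarrow> ennreal) \<Rightarrow> 'a measure \<Rightarrow> 'a measure \<Rightarrow> ennreal" where
  "OT_cost c \<mu> \<nu> = (INF \<pi>\<in>couplings \<mu> \<nu>. \<integral>\<^sup>+ z. c (fst z) (snd z) \<partial>\<pi>)"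

definition D_cost :: "('a::topological_space measure \<Rightarrow> 'a measure \<Rightarrow> ennreal) \<Rightarrow>
    ('a \<Rightarrow> 'a \<Rightarrow> ennreal) \<Rightarrow> 'a measure \<Rightarrow> 'a measure \<Rightarrow> ennreal" where
  "D_cost D c' \<nu> \<mu> = (INF \<eta>\<in>Prob. D \<eta> \<mu> + OT_cost c' \<eta> \<nu>)"

end

theory Submission
  imports Defs
begin

lemma Prob_D:
  assumes "P \<in> Prob"
  shows "sets P = sets borel" "prob_space P" "space P = UNIV"
proof -
  show s: "sets P = sets borel" "prob_space P" using assms unfolding Prob_def by auto
  show "space P = UNIV" using sets_eq_imp_space_eq[OF s(1)] by simp
qed

lemma topspace_weak_top: "topspace weak_top = Prob"
proof -
  have "UNIV \<in> {{P. (\<integral>x. f x \<partial>P) \<in> U} | f U. continuous_on UNIV (f :: 'a \<Rightarrow> real) \<and> bounded (range f) \<and> open U}"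
    by (rule CollectI, rule exI[of _ "\<lambda>_. 0"], rule exI[of _ UNIV]) auto
  then have "\<Union>{{P. (\<integral>x. f x \<partial>P) \<in> U} | f U. continuous_on UNIV (f :: 'a \<Rightarrow> real) \<and> bounded (range f) \<and> open U} = (UNIV :: 'a measure set)"
    by blast
  then show ?thesis unfolding weak_top_def topspace_subtopology topology_generated_by_topspace
    by simp
qed

lemma openin_weak_top_basic:
  fixes f :: "'a::topological_space \<Rightarrow> real"
  assumes "continuous_on UNIV f" "bounded (range f)" "open U"
  shows "openin weak_top {P \<in> Prob. (\<integral>x. f x \<partial>P) \<in> U}"
  unfolding weak_top_def openin_subtopology
  apply (rule exI[of _ "{P. (\<integral>x. f x \<partial>P) \<in> U}"])
  using assms by (auto intro!: topology_generated_by_Basis)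

definition approx_fun :: "'a::metric_space set \<Rightarrow> nat \<Rightarrow> 'a \<Rightarrow> real" where
  "approx_fun U k x = (if U = UNIV then 1 else min 1 (real k * infdist x (- U)))"

lemma approx_fun_cont: "continuous_on UNIV (approx_fun U k)"
  unfolding approx_fun_def
  by (cases "U = UNIV") (auto intro!: continuous_intros continuous_on_infdist)

lemma approx_fun_bounds: "0 \<le> approx_fun U k x" "approx_fun U k x \<le> 1"
  unfolding approx_fun_def by (auto simp: infdist_nonneg)

lemma approx_fun_abs: "\<bar>approx_fun U k x\<bar> \<le> 1"
  using approx_fun_bounds[of U k x] by linarith

lemma approx_fun_bounded: "bounded (range (approx_fun U k))"
  unfolding bounded_iff using approx_fun_abs by (intro exI[of _ 1]) auto

lemma approx_fun_le: "approx_fun U k x \<le> indicator U x"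
proof (cases "x \<in> U")
  case True then show ?thesis using approx_fun_bounds by simp
next
  case False
  then have "U \<noteq> UNIV" "infdist x (- U) = 0" by (auto intro!: infdist_zero)
  then show ?thesis using False unfolding approx_fun_def by simp
qed

lemma approx_fun_lim:
  assumes "open U"
  shows "(\<lambda>k. approx_fun U k x) \<longlonglongrightarrow> indicator U x"
proof (cases "x \<in> U \<and> U \<noteq> UNIV")
  case True
  have cl: "closed (- U)" "- U \<noteq> {}" using assms True by auto
  have "infdist x (- U) \<noteq> 0" using in_closed_iff_infdist_zero[OF cl] True by auto
  then have pos: "infdist x (- U) > 0" using infdist_nonneg[of x "-U"] by linarith
  obtain N :: nat where N: "1 / infdist x (- U) < N" using reals_Archimedean2 by blast
  have "eventually (\<lambda>k. approx_fun U k x = indicator U x) sequentially"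
    unfolding eventually_sequentially
  proof (intro exI allI impI)
    fix k assume "N \<le> k"
    then have "1 / infdist x (- U) < real k" using N by linarith
    then have "1 \<le> real k * infdist x (- U)" using pos by (simp add: field_simps)
    then show "approx_fun U k x = indicator U x" using True unfolding approx_fun_def by simp
  qed
  then show ?thesis by (rule tendsto_eventually)
next
  case False
  then consider "U = UNIV" | "x \<notin> U" by blast
  then show ?thesis
  proof cases
    case 1 then show ?thesis unfolding approx_fun_def by simp
  next
    case 2
    then have "approx_fun U k x = 0" for k
      using approx_fun_le[of U k x] approx_fun_bounds[of U k x] by simp
    then show ?thesis using 2 by simp
  qed
qed

lemma approx_fun_integral_lim:
  assumes "P \<in> Prob" "open U"
  shows "(\<lambda>k. \<integral>x. approx_fun U k x \<partial>P) \<longlonglongrightarrow> measure P U"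
proof -
  interpret prob_space P using Prob_D[OF assms(1)] by simp
  have sP: "sets P = sets borel" using Prob_D[OF assms(1)] by simp
  have m: "approx_fun U k \<in> borel_measurable P" for k
    using borel_measurable_continuous_onI[OF approx_fun_cont] measurable_cong_sets[OF sP refl] by blast
  have "U \<in> sets P" using assms(2) sP by simp
  then have mi: "indicator U \<in> borel_measurable P" by simp
  have "(\<lambda>k. \<integral>x. approx_fun U k x \<partial>P) \<longlonglongrightarrow> (\<integral>x. indicator U x \<partial>P)"
    by (rule integral_dominated_convergence[where w="\<lambda>_. 1"])
       (use m mi approx_fun_lim[OF assms(2)] approx_fun_abs in \<open>auto intro!: AE_I2\<close>)
  then show ?thesis using \<open>U \<in> sets P\<close> by simp
qed


lemma approx_fun_integrable:
  assumes "P \<in> Prob"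
  shows "integrable P (approx_fun U k)"
proof -
  interpret prob_space P using Prob_D[OF assms(1)] by simp
  have sP: "sets P = sets borel" using Prob_D[OF assms(1)] by simp
  have m: "approx_fun U k \<in> borel_measurable P"
    using borel_measurable_continuous_onI[OF approx_fun_cont] measurable_cong_sets[OF sP refl] by blast
  show ?thesis by (rule integrable_const_bound[where B=1]) (use m approx_fun_abs in \<open>auto intro!: AE_I2\<close>)
qed

lemma approx_fun_integral_le:
  assumes "P \<in> Prob" "open U"
  shows "(\<integral>x. approx_fun U k x \<partial>P) \<le> measure P U"
proof -
  interpret prob_space P using Prob_D[OF assms(1)] by simp
  have sP: "sets P = sets borel" using Prob_D[OF assms(1)] by simp
  have "U \<in> sets P" using assms(2) sP by simp
  have "integrable P (indicator U :: 'a \<Rightarrow> real)"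
    by (rule integrable_const_bound[where B=1]) (use \<open>U \<in> sets P\<close> in auto)
  have "(\<integral>x. approx_fun U k x \<partial>P) \<le> (\<integral>x. indicator U x \<partial>P)"
    by (rule integral_mono) (use approx_fun_integrable[OF assms(1)] \<open>integrable P (indicator U :: 'a \<Rightarrow> real)\<close> approx_fun_le in auto)
  then show ?thesis using \<open>U \<in> sets P\<close> by simp
qed

lemma openin_measure_open:
  fixes U :: "'a::metric_space set"
  assumes "open U"
  shows "openin weak_top {P \<in> Prob. t < measure P U}"
proof -
  have eq: "{P \<in> Prob. t < measure P U} = (\<Union>k. {P \<in> Prob. (\<integral>x. approx_fun U k x \<partial>P) \<in> {t<..}})"
  proof (intro equalityI subsetI)
    fix P assume P: "P \<in> {P \<in> Prob. t < measure P U}"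
    then have "eventually (\<lambda>k. t < (\<integral>x. approx_fun U k x \<partial>P)) sequentially"
      using order_tendstoD(1)[OF approx_fun_integral_lim[OF _ assms]] by auto
    then obtain k where "t < (\<integral>x. approx_fun U k x \<partial>P)" by (meson eventually_sequentially order_refl)
    then show "P \<in> (\<Union>k. {P \<in> Prob. (\<integral>x. approx_fun U k x \<partial>P) \<in> {t<..}})" using P by auto
  next
    fix P assume "P \<in> (\<Union>k. {P \<in> Prob. (\<integral>x. approx_fun U k x \<partial>P) \<in> {t<..}})"
    then obtain k where "P \<in> Prob" "t < (\<integral>x. approx_fun U k x \<partial>P)" by auto
    then show "P \<in> {P \<in> Prob. t < measure P U}"
      using approx_fun_integral_le[OF _ assms, of P k] by auto
  qed
  have "openin weak_top {P \<in> Prob. (\<integral>x. approx_fun U k x \<partial>P) \<in> {t<..}}" for k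
    by (rule openin_weak_top_basic[OF approx_fun_cont approx_fun_bounded open_greaterThan])
  then show ?thesis unfolding eq
    by (intro openin_Union) auto
qed

lemma Prob_eqI_cont:
  fixes \<eta> \<nu> :: "'a::metric_space measure"
  assumes "\<eta> \<in> Prob" "\<nu> \<in> Prob"
    and le: "\<And>f::'a \<Rightarrow> real. continuous_on UNIV f \<Longrightarrow> (\<forall>x. \<bar>f x\<bar> \<le> 1) \<Longrightarrow> (\<integral>x. f x \<partial>\<eta>) \<le> (\<integral>x. f x \<partial>\<nu>)"
  shows "\<eta> = \<nu>"
proof -
  have eqm: "measure \<eta> U = measure \<nu> U" if "open U" for U
  proof -
    have "(\<integral>x. approx_fun U k x \<partial>\<eta>) = (\<integral>x. approx_fun U k x \<partial>\<nu>)" for k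
    proof -
      have "(\<integral>x. approx_fun U k x \<partial>\<eta>) \<le> (\<integral>x. approx_fun U k x \<partial>\<nu>)"
        using le[of "approx_fun U k"] by (auto intro: approx_fun_cont approx_fun_abs)
      moreover have "(\<integral>x. - approx_fun U k x \<partial>\<eta>) \<le> (\<integral>x. - approx_fun U k x \<partial>\<nu>)"
        using le[of "\<lambda>x. - approx_fun U k x"] by (auto intro!: continuous_intros approx_fun_cont approx_fun_abs)
      ultimately show ?thesis by simp
    qed
    then have "(\<lambda>k. \<integral>x. approx_fun U k x \<partial>\<eta>) = (\<lambda>k. \<integral>x. approx_fun U k x \<partial>\<nu>)" by auto
    then show ?thesis
      using approx_fun_integral_lim[OF assms(1) that] approx_fun_integral_lim[OF assms(2) that]
      by (metis LIMSEQ_unique)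
  qed
  interpret e: prob_space \<eta> using Prob_D[OF assms(1)] by simp
  interpret n: prob_space \<nu> using Prob_D[OF assms(2)] by simp
  show ?thesis
  proof (rule measure_eqI_generator_eq[where E="Collect open" and \<Omega>=UNIV and A="\<lambda>_. UNIV"])
    show "Int_stable (Collect open)" by (auto simp: Int_stable_def)
    show "sets \<eta> = sigma_sets UNIV (Collect open)" "sets \<nu> = sigma_sets UNIV (Collect open)"
      using Prob_D(1)[OF assms(1)] Prob_D(1)[OF assms(2)] by (simp_all add: borel_def)
    fix X :: "'a set" assume "X \<in> Collect open"
    then show "emeasure \<eta> X = emeasure \<nu> X"
      using eqm[of X] by (simp add: e.emeasure_eq_measure n.emeasure_eq_measure)
  qed auto
qed

lemma cost_pos_lower:
  fixes c :: "'a::metric_space \<Rightarrow> 'a \<Rightarrow> ennreal"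
  assumes "cost_function c" "compact S" "\<forall>z\<in>S. 0 < c (fst z) (snd z)"
  shows "\<exists>\<delta>>0. \<forall>z\<in>S. ennreal \<delta> \<le> c (fst z) (snd z)"
proof -
  have "\<forall>z\<in>S. \<exists>a>0. ennreal a < c (fst z) (snd z)"
  proof
    fix z assume "z \<in> S"
    then have "0 < c (fst z) (snd z)" using assms(3) by auto
    then obtain b where b: "0 < b" "b < c (fst z) (snd z)" using dense by blast
    then have "b < top" using top.not_eq_extremum by fastforce
    then have "b = ennreal (enn2real b)" by simp
    moreover have "enn2real b > 0" using b \<open>b < top\<close> by (simp add: enn2real_positive_iff)
    ultimately show "\<exists>a>0. ennreal a < c (fst z) (snd z)" using b by metis
  qed
  then obtain a where a: "\<And>z. z \<in> S \<Longrightarrow> a z > 0 \<and> ennreal (a z) < c (fst z) (snd z)" by metis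
  have opn: "open {w. ennreal (a z) < c (fst w) (snd w)}" for z
    using assms(1) unfolding cost_function_def by blast
  obtain S' where S': "S' \<subseteq> S" "finite S'" "S \<subseteq> (\<Union>z\<in>S'. {w. ennreal (a z) < c (fst w) (snd w)})"
    by (rule compactE_image[OF assms(2) opn, where C=S]) (use a in fastforce)
  show ?thesis
  proof (cases "S' = {}")
    case True then show ?thesis using S' by (intro exI[of _ 1]) auto
  next
    case False
    have pos: "Min (a ` S') > 0" using False S' a by (subst Min_gr_iff) auto
    show ?thesis
    proof (intro exI[of _ "Min (a ` S')"] conjI ballI pos)
      fix w assume "w \<in> S"
      then obtain z where z: "z \<in> S'" "ennreal (a z) < c (fst w) (snd w)" using S' by auto
      have "Min (a ` S') \<le> a z" using z S' by auto
      then have "ennreal (Min (a ` S')) \<le> ennreal (a z)" by (rule ennreal_leI)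
      then show "ennreal (Min (a ` S')) \<le> c (fst w) (snd w)" using z by simp
    qed
  qed
qed


lemma compactin_weak_top_Prob: "compactin weak_top K \<Longrightarrow> K \<subseteq> Prob"
  using compactin_subset_topspace topspace_weak_top by blast

lemma uniform_cover:
  fixes K :: "'a::metric_space measure set" and xs :: "nat \<Rightarrow> 'a"
  assumes K: "compactin weak_top K" and cov: "(\<Union>i. ball (xs i) r) = UNIV" and q: "q < 1"
  shows "\<exists>k. \<forall>P\<in>K. q < measure P (\<Union>i\<in>{0..k}. ball (xs i) r)"
proof -
  define V where "V k = (\<Union>i\<in>{0..k}. ball (xs i) r)" for k
  define Op where "Op k = {P \<in> Prob. q < measure P (V k)}" for k
  have KP: "K \<subseteq> Prob" using compactin_weak_top_Prob[OF K] .
  have incV: "incseq V"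
  proof (rule monoI)
    fix m n :: nat assume "m \<le> n" then show "V m \<le> V n" unfolding V_def by (intro UN_mono) auto
  qed
  have oV: "open (V k)" for k unfolding V_def by (intro open_UN) auto
  have UV: "(\<Union>k. V k) = UNIV"
  proof (intro equalityI subsetI)
    fix x :: 'a assume "x \<in> UNIV"
    then obtain i where "x \<in> ball (xs i) r" using cov by blast
    then have "x \<in> V i" unfolding V_def by (intro UN_I[of i]) auto
    then show "x \<in> (\<Union>k. V k)" by blast
  qed auto
  have lim: "(\<lambda>k. measure P (V k)) \<longlonglongrightarrow> 1" if "P \<in> Prob" for P
  proof -
    interpret prob_space P using Prob_D[OF that] by simp
    have "range V \<subseteq> sets P" using Prob_D(1)[OF that] oV by auto
    from finite_Lim_measure_incseq[OF this incV] show ?thesis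
      using UV Prob_D(3)[OF that] prob_space by simp
  qed
  have opn: "openin weak_top (Op k)" for k
    unfolding Op_def by (rule openin_measure_open[OF oV])
  have "K \<subseteq> \<Union>(range Op)"
  proof
    fix P assume "P \<in> K"
    then have "P \<in> Prob" using KP by auto
    then have "eventually (\<lambda>k. q < measure P (V k)) sequentially"
      using order_tendstoD(1)[OF lim q] by auto
    then obtain k where "q < measure P (V k)" by (meson eventually_sequentially order_refl)
    then show "P \<in> \<Union>(range Op)" using \<open>P \<in> Prob\<close> unfolding Op_def by auto
  qed
  moreover have "\<forall>U\<in>range Op. openin weak_top U" using opn by auto
  ultimately obtain F where F: "finite F" "F \<subseteq> range Op" "K \<subseteq> \<Union>F"
    using K unfolding compactin_def by blast
  then obtain S where S: "finite S" "F = Op ` S" using finite_subset_image[OF F(1) F(2)] by blast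
  show ?thesis
  proof (intro exI[of _ "Max (insert 0 S)"] ballI)
    fix P assume "P \<in> K"
    then obtain k where k: "k \<in> S" "P \<in> Op k" using F(3) unfolding S(2) by blast
    have "k \<le> Max (insert 0 S)" using k S by auto
    then have sub: "V k \<subseteq> V (Max (insert 0 S))" using incV by (simp add: incseq_def)
    have "P \<in> Prob" using KP \<open>P \<in> K\<close> by auto
    interpret prob_space P using Prob_D[OF \<open>P \<in> Prob\<close>] by simp
    have "measure P (V k) \<le> measure P (V (Max (insert 0 S)))"
      by (rule finite_measure_mono[OF sub]) (use Prob_D(1)[OF \<open>P \<in> Prob\<close>] oV in auto)
    then show "q < measure P (\<Union>i\<in>{0..Max (insert 0 S)}. ball (xs i) r)"
      using k unfolding Op_def V_def by auto
  qed
qed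

lemma uniform_tight:
  fixes K :: "'a::polish_space measure set"
  assumes K: "compactin weak_top K" and e: "e > 0"
  shows "\<exists>C. compact C \<and> (\<forall>P\<in>K. measure P (- C) \<le> e)"
proof -
  have KP: "K \<subseteq> Prob" using compactin_weak_top_Prob[OF K] .
  from countable_dense_setE obtain X :: "'a set"
    where X: "countable X" "\<And>Y :: 'a set. open Y \<Longrightarrow> Y \<noteq> {} \<Longrightarrow> \<exists>d\<in>X. d \<in> Y"
    by auto
  have Xne: "X \<noteq> {}" using X(2)[of UNIV] by auto
  define xs where "xs = from_nat_into X"
  have cov: "(\<Union>i. ball (xs i) r) = UNIV" if "r > 0" for r
  proof safe
    fix x
    from X(2)[OF open_ball[of x r]] \<open>r > 0\<close> obtain d where d: "d \<in> X" "d \<in> ball x r" by auto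
    then have "xs (to_nat_on X d) = d" unfolding xs_def using X(1) by simp
    then show "x \<in> (\<Union>i. ball (xs i) r)" using d by (intro UN_I[of "to_nat_on X d"]) (auto simp: dist_commute)
  qed auto
  have "\<forall>n. \<exists>k. \<forall>P\<in>K. 1 - e * (1/2)^Suc n < measure P (\<Union>i\<in>{0..k}. ball (xs i) (1 / Suc n))"
  proof
    fix n
    have "1 - e * (1/2)^Suc n < 1" using e by simp
    then show "\<exists>k. \<forall>P\<in>K. 1 - e * (1/2)^Suc n < measure P (\<Union>i\<in>{0..k}. ball (xs i) (1 / Suc n))"
      by (intro uniform_cover[OF K cov]) auto
  qed
  then obtain k where k: "\<And>n P. P \<in> K \<Longrightarrow> 1 - e * (1/2)^Suc n < measure P (\<Union>i\<in>{0..k n}. ball (xs i) (1 / Suc n))"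
    by metis
  define B where "B n = (\<Union>i\<in>{0..k n}. cball (xs i) (1 / Suc n))" for n
  define C where "C = (\<Inter>n. B n)"
  have clB: "closed (B n)" for n unfolding B_def by auto
  then have "closed C" unfolding C_def by auto
  have "compact C"
    unfolding compact_eq_totally_bounded
  proof safe
    show "Topological_Spaces.complete C" using \<open>closed C\<close> by (simp add: complete_eq_closed)
    fix e'::real assume "0 < e'"
    then obtain n where n: "1 / real (Suc n) < e'" by (rule nat_approx_posE)
    let ?k = "xs ` {0..k n}"
    have "finite ?k" by simp
    moreover have "C \<subseteq> (\<Union>x\<in>?k. ball x e')" unfolding C_def B_def using n by force
    ultimately show "\<exists>k. finite k \<and> C \<subseteq> (\<Union>x\<in>k. ball x e')" by blast
  qed
  moreover have "measure P (- C) \<le> e" if "P \<in> K" for P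
  proof -
    have PP: "P \<in> Prob" using KP that by auto
    interpret prob_space P using Prob_D[OF PP] by simp
    have sP: "sets P = sets borel" "space P = UNIV" using Prob_D[OF PP] by auto
    have Bm: "B n \<in> sets P" for n using clB sP by auto
    have cB: "measure P (- B n) \<le> e * (1/2)^Suc n" for n
    proof -
      have "measure P (\<Union>i\<in>{0..k n}. ball (xs i) (1 / Suc n)) \<le> measure P (B n)"
        by (rule finite_measure_mono) (auto simp: B_def sP)
      moreover have "measure P (- B n) = 1 - measure P (B n)"
        using prob_compl[OF Bm[of n]] sP by (simp add: Compl_eq_Diff_UNIV)
      ultimately show ?thesis using k[OF that, of n] by linarith
    qed
    have sumg: "(\<lambda>n. e * (1/2)^Suc n) sums e"
      using sums_mult[OF power_half_series, of e] by simp
    have summ: "summable (\<lambda>n. measure P (- B n))"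
      by (rule summable_comparison_test[OF _ sums_summable[OF sumg]]) (use cB in auto)
    have "- C = (\<Union>n. - B n)" unfolding C_def by auto
    moreover have "range (\<lambda>n. - B n) \<subseteq> sets P" using clB sP by auto
    ultimately have "measure P (- C) \<le> (\<Sum>n. measure P (- B n))"
      using finite_measure_subadditive_countably[OF _ summ] by auto
    also have "\<dots> \<le> (\<Sum>n. e * (1/2)^Suc n)"
      by (rule suminf_le[OF cB summ sums_summable[OF sumg]])
    also have "\<dots> = e" using sumg by (simp add: sums_iff)
    finally show ?thesis .
  qed
  ultimately show ?thesis by blast
qed


lemma coupling_facts:
  fixes \<eta> \<nu> :: "'a::second_countable_topology measure"
  assumes "\<pi> \<in> couplings \<eta> \<nu>"
  shows "prob_space \<pi>" "sets \<pi> = sets borel" "space \<pi> = UNIV"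
    and "\<And>A. A \<in> sets borel \<Longrightarrow> measure \<pi> (fst -` A) = measure \<eta> A"
    and "\<And>A. A \<in> sets borel \<Longrightarrow> measure \<pi> (snd -` A) = measure \<nu> A"
    and "\<And>f::'a \<Rightarrow> real. f \<in> borel_measurable borel \<Longrightarrow> (\<integral>z. f (fst z) \<partial>\<pi>) = (\<integral>x. f x \<partial>\<eta>)"
    and "\<And>f::'a \<Rightarrow> real. f \<in> borel_measurable borel \<Longrightarrow> (\<integral>z. f (snd z) \<partial>\<pi>) = (\<integral>x. f x \<partial>\<nu>)"
proof -
  have a: "sets \<pi> = sets borel" "prob_space \<pi>" "distr \<pi> borel fst = \<eta>" "distr \<pi> borel snd = \<nu>"
    using assms unfolding couplings_def by auto
  show "prob_space \<pi>" "sets \<pi> = sets borel" using a by auto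
  show sp: "space \<pi> = UNIV" using sets_eq_imp_space_eq[OF a(1)] by simp
  have mf: "fst \<in> measurable \<pi> borel"
    using borel_measurable_continuous_onI[OF continuous_on_fst[OF continuous_on_id]]
      measurable_cong_sets[OF a(1) refl] by blast
  have ms: "snd \<in> measurable \<pi> borel"
    using borel_measurable_continuous_onI[OF continuous_on_snd[OF continuous_on_id]]
      measurable_cong_sets[OF a(1) refl] by blast
  show "measure \<pi> (fst -` A) = measure \<eta> A" if "A \<in> sets borel" for A
    using measure_distr[OF mf that] a(3) sp by simp
  show "measure \<pi> (snd -` A) = measure \<nu> A" if "A \<in> sets borel" for A
    using measure_distr[OF ms that] a(4) sp by simp
  show "(\<integral>z. f (fst z) \<partial>\<pi>) = (\<integral>x. f x \<partial>\<eta>)" if "f \<in> borel_measurable borel" for f :: "'a \<Rightarrow> real"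
    using integral_distr[OF mf that] a(3) by simp
  show "(\<integral>z. f (snd z) \<partial>\<pi>) = (\<integral>x. f x \<partial>\<nu>)" if "f \<in> borel_measurable borel" for f :: "'a \<Rightarrow> real"
    using integral_distr[OF ms that] a(4) by simp
qed


lemma local_bound:
  fixes c :: "'a::polish_space \<Rightarrow> 'a \<Rightarrow> ennreal" and K :: "'a measure set"
  assumes cf: "cost_function c" and c0: "\<forall>x1 x2. c x1 x2 = 0 \<longleftrightarrow> x1 = x2"
    and K: "compactin weak_top K" and \<nu>: "\<nu> \<in> Prob" and \<eta>: "\<eta> \<in> Prob" and ne: "\<eta> \<noteq> \<nu>"
  shows "\<exists>N \<delta>. openin weak_top N \<and> \<eta> \<in> N \<and> \<delta> > 0 \<and> (\<forall>\<eta>'\<in>N \<inter> K. ennreal \<delta> \<le> OT_cost c \<eta>' \<nu>)"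
proof -
  obtain f :: "'a \<Rightarrow> real" where f: "continuous_on UNIV f" "\<forall>x. \<bar>f x\<bar> \<le> 1"
    and lt: "(\<integral>x. f x \<partial>\<nu>) < (\<integral>x. f x \<partial>\<eta>)"
    using Prob_eqI_cont[OF \<eta> \<nu>] ne by force
  have fb: "bounded (range f)" unfolding bounded_iff using f(2) by (intro exI[of _ 1]) auto
  have fm: "f \<in> borel_measurable borel" using borel_measurable_continuous_onI[OF f(1)] .
  define e where "e = ((\<integral>x. f x \<partial>\<eta>) - (\<integral>x. f x \<partial>\<nu>)) / 3"
  have e: "e > 0" using lt unfolding e_def by simp
  define N where "N = {P \<in> Prob. (\<integral>x. f x \<partial>P) \<in> {(\<integral>x. f x \<partial>\<eta>) - e<..}}"
  have oN: "openin weak_top N" unfolding N_def by (rule openin_weak_top_basic[OF f(1) fb open_greaterThan])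
  have \<eta>N: "\<eta> \<in> N" unfolding N_def using \<eta> e by simp
  obtain K1 where K1: "compact K1" "\<And>P. P \<in> K \<Longrightarrow> measure P (- K1) \<le> e / 8"
    using uniform_tight[OF K, of "e/8"] e by auto
  have "compactin weak_top {\<nu>}" unfolding compactin_sing topspace_weak_top using \<nu> by simp
  then obtain K2 where K2: "compact K2" "measure \<nu> (- K2) \<le> e / 8"
    using uniform_tight[of "{\<nu>}" "e/8"] e by auto
  define g where "g z = f (fst z) - f (snd z)" for z :: "'a \<times> 'a"
  have gc: "continuous_on UNIV g" unfolding g_def
    by (intro continuous_intros continuous_on_compose2[OF f(1)]) auto
  define A0 where "A0 = {z. e \<le> g z}"
  define A where "A = A0 \<inter> (K1 \<times> K2)"
  have clA0: "closed A0" unfolding A0_def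
    by (rule closed_Collect_le[OF continuous_on_const gc])
  have cA: "compact A" unfolding A_def using clA0 compact_Times[OF K1(1) K2(1)] by auto
  have posA: "\<forall>z\<in>A. 0 < c (fst z) (snd z)"
  proof
    fix z assume "z \<in> A"
    then have "e \<le> g z" unfolding A_def A0_def by auto
    then have "fst z \<noteq> snd z" using e unfolding g_def by auto
    then have "c (fst z) (snd z) \<noteq> 0" using c0 by blast
    then show "0 < c (fst z) (snd z)" by (simp add: zero_less_iff_neq_zero)
  qed
  obtain \<delta>0 where \<delta>0: "\<delta>0 > 0" "\<forall>z\<in>A. ennreal \<delta>0 \<le> c (fst z) (snd z)"
    using cost_pos_lower[OF cf cA posA] by auto
  have bound: "ennreal (\<delta>0 * (e / 4)) \<le> OT_cost c \<eta>' \<nu>" if \<eta>': "\<eta>' \<in> N" "\<eta>' \<in> K" for \<eta>'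
    unfolding OT_cost_def
  proof (rule INF_greatest)
    fix \<pi> assume \<pi>: "\<pi> \<in> couplings \<eta>' \<nu>"
    note cp = coupling_facts[OF \<pi>]
    interpret prob_space \<pi> using cp(1) .
    have cf1: "continuous_on UNIV (\<lambda>z::'a \<times> 'a. f (fst z))"
      by (intro continuous_on_compose2[OF f(1)] continuous_intros) auto
    have cf2: "continuous_on UNIV (\<lambda>z::'a \<times> 'a. f (snd z))"
      by (intro continuous_on_compose2[OF f(1)] continuous_intros) auto
    have mf1: "(\<lambda>z. f (fst z)) \<in> borel_measurable \<pi>"
      using borel_measurable_continuous_onI[OF cf1] measurable_cong_sets[OF cp(2) refl] by blast
    have mf2: "(\<lambda>z. f (snd z)) \<in> borel_measurable \<pi>"
      using borel_measurable_continuous_onI[OF cf2] measurable_cong_sets[OF cp(2) refl] by blast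
    have int1: "integrable \<pi> (\<lambda>z. f (fst z))"
      by (rule integrable_const_bound[where B=1, OF AE_I2 mf1]) (use f(2) in simp)
    have int2: "integrable \<pi> (\<lambda>z. f (snd z))"
      by (rule integrable_const_bound[where B=1, OF AE_I2 mf2]) (use f(2) in simp)
    have A0m: "A0 \<in> sets \<pi>" using clA0 cp(2) by simp
    have Am: "A \<in> sets \<pi>" using compact_imp_closed[OF cA] cp(2) by simp
    have "(\<integral>z. g z \<partial>\<pi>) = (\<integral>x. f x \<partial>\<eta>') - (\<integral>x. f x \<partial>\<nu>)"
      unfolding g_def using int1 int2 cp(6)[OF fm] cp(7)[OF fm] by simp
    moreover have "(\<integral>x. f x \<partial>\<eta>') > (\<integral>x. f x \<partial>\<eta>) - e" using \<eta>'(1) unfolding N_def by simp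
    moreover have "3 * e = (\<integral>x. f x \<partial>\<eta>) - (\<integral>x. f x \<partial>\<nu>)" unfolding e_def by simp
    ultimately have g2e: "(\<integral>z. g z \<partial>\<pi>) > 2 * e" by linarith
    have "(\<integral>z. g z \<partial>\<pi>) \<le> (\<integral>z. 2 * indicator A0 z + e \<partial>\<pi>)"
    proof (rule integral_mono)
      show "integrable \<pi> g" unfolding g_def using int1 int2 by simp
      show "integrable \<pi> (\<lambda>z. 2 * indicator A0 z + e)" using A0m by (intro Bochner_Integration.integrable_add integrable_mult_right integrable_real_indicator integrable_const) (auto simp: emeasure_eq_measure)
      fix z
      have "\<bar>f (fst z)\<bar> \<le> 1" "\<bar>f (snd z)\<bar> \<le> 1" using f(2) by auto
      then show "g z \<le> 2 * indicator A0 z + e"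
      proof (cases "z \<in> A0")
        case True then show ?thesis using \<open>\<bar>f (fst z)\<bar> \<le> 1\<close> \<open>\<bar>f (snd z)\<bar> \<le> 1\<close> e
          unfolding g_def by (simp add: abs_le_iff)
      next
        case False then show ?thesis unfolding A0_def by simp
      qed
    qed
    also have "\<dots> = 2 * measure \<pi> A0 + e"
      using A0m by (subst Bochner_Integration.integral_add) (auto intro!: integrable_real_indicator integrable_mult_right simp: emeasure_eq_measure prob_space)
    finally have mA0: "measure \<pi> A0 > e / 2" using g2e by simp
    have sub: "A0 \<subseteq> A \<union> (fst -` (- K1) \<union> snd -` (- K2))" unfolding A_def by auto
    have oK1: "open (- K1)" "open (- K2)" using compact_imp_closed[OF K1(1)] compact_imp_closed[OF K2(1)] by auto
    have bK: "- K1 \<in> sets borel" "- K2 \<in> sets borel" using oK1 by auto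
    have m1: "measure \<pi> (fst -` (- K1)) \<le> e / 8"
      using cp(4)[OF bK(1)] K1(2)[OF \<eta>'(2)] by simp
    have m2: "measure \<pi> (snd -` (- K2)) \<le> e / 8"
      using cp(5)[OF bK(2)] K2(2) by simp
    have eq1: "fst -` (- K1) = (- K1) \<times> (UNIV :: 'a set)" by auto
    have eq2: "snd -` (- K2) = (UNIV :: 'a set) \<times> (- K2)" by auto
    have "open (fst -` (- K1) :: ('a \<times> 'a) set)" unfolding eq1 using oK1(1) by (intro open_Times) auto
    moreover have "open (snd -` (- K2) :: ('a \<times> 'a) set)" unfolding eq2 using oK1(2) by (intro open_Times) auto
    ultimately have s1: "fst -` (- K1) \<in> sets \<pi>" "snd -` (- K2) \<in> sets \<pi>"
      unfolding cp(2) by auto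
    have "measure \<pi> A0 \<le> measure \<pi> (A \<union> (fst -` (- K1) \<union> snd -` (- K2)))"
      by (rule finite_measure_mono[OF sub]) (use Am s1 in auto)
    also have "\<dots> \<le> measure \<pi> A + measure \<pi> (fst -` (- K1) \<union> snd -` (- K2))"
      by (rule measure_Un_le) (use Am s1 in auto)
    also have "\<dots> \<le> measure \<pi> A + (measure \<pi> (fst -` (- K1)) + measure \<pi> (snd -` (- K2)))"
      using measure_Un_le[OF s1] by simp
    finally have mA: "measure \<pi> A \<ge> e / 4" using mA0 m1 m2 by simp
    have "ennreal (\<delta>0 * (e / 4)) = ennreal \<delta>0 * ennreal (e / 4)"
      using \<delta>0(1) e using ennreal_mult[of \<delta>0 "e / 4"] by simp
    also have "\<dots> \<le> ennreal \<delta>0 * emeasure \<pi> A"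
      using mA by (intro mult_left_mono) (auto simp: emeasure_eq_measure ennreal_leI)
    also have "\<dots> = (\<integral>\<^sup>+ z. ennreal \<delta>0 * indicator A z \<partial>\<pi>)"
      using Am by (simp add: nn_integral_cmult_indicator)
    also have "\<dots> \<le> (\<integral>\<^sup>+ z. c (fst z) (snd z) \<partial>\<pi>)"
      by (rule nn_integral_mono) (use \<delta>0(2) in \<open>auto simp: indicator_def\<close>)
    finally show "ennreal (\<delta>0 * (e / 4)) \<le> (\<integral>\<^sup>+ z. c (fst z) (snd z) \<partial>\<pi>)" .
  qed
  show ?thesis
    by (rule exI[of _ N], rule exI[of _ "\<delta>0 * (e / 4)"]) (use oN \<eta>N \<delta>0(1) e bound in auto)
qed


lemma key_bound:
  fixes c :: "'a::polish_space \<Rightarrow> 'a \<Rightarrow> ennreal" and K :: "'a measure set"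
  assumes cf: "cost_function c" and c0: "\<forall>x1 x2. c x1 x2 = 0 \<longleftrightarrow> x1 = x2"
    and K: "compactin weak_top K" and \<nu>: "\<nu> \<in> Prob" and nK: "\<nu> \<notin> K"
  shows "\<exists>\<delta>>0. \<forall>\<eta>\<in>K. ennreal \<delta> \<le> OT_cost c \<eta> \<nu>"
proof -
  define U where "U = {N. openin weak_top N \<and> (\<exists>\<delta>>0. \<forall>\<eta>'\<in>N \<inter> K. ennreal \<delta> \<le> OT_cost c \<eta>' \<nu>)}"
  have KP: "K \<subseteq> Prob" using compactin_weak_top_Prob[OF K] .
  have "K \<subseteq> \<Union>U"
  proof
    fix \<eta> assume "\<eta> \<in> K"
    then have "\<eta> \<in> Prob" "\<eta> \<noteq> \<nu>" using KP nK by auto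
    from local_bound[OF cf c0 K \<nu> this] obtain N \<delta> where
      "openin weak_top N" "\<eta> \<in> N" "\<delta> > 0" "\<forall>\<eta>'\<in>N \<inter> K. ennreal \<delta> \<le> OT_cost c \<eta>' \<nu>" by blast
    then show "\<eta> \<in> \<Union>U" unfolding U_def by blast
  qed
  moreover have "\<forall>N\<in>U. openin weak_top N" unfolding U_def by blast
  ultimately obtain F where F: "finite F" "F \<subseteq> U" "K \<subseteq> \<Union>F"
    using K unfolding compactin_def by blast
  then have "\<forall>N\<in>F. \<exists>\<delta>>0. \<forall>\<eta>'\<in>N \<inter> K. ennreal \<delta> \<le> OT_cost c \<eta>' \<nu>" unfolding U_def by blast
  then obtain d where d: "\<And>N. N \<in> F \<Longrightarrow> d N > 0 \<and> (\<forall>\<eta>'\<in>N \<inter> K. ennreal (d N) \<le> OT_cost c \<eta>' \<nu>)"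
    by metis
  show ?thesis
  proof (cases "F = {}")
    case True then show ?thesis using F by (intro exI[of _ 1]) auto
  next
    case False
    have pos: "Min (d ` F) > 0" using False F d by (subst Min_gr_iff) auto
    show ?thesis
    proof (intro exI[of _ "Min (d ` F)"] conjI ballI pos)
      fix \<eta> assume "\<eta> \<in> K"
      then obtain N where N: "N \<in> F" "\<eta> \<in> N" using F by auto
      have "Min (d ` F) \<le> d N" using N F by auto
      then have "ennreal (Min (d ` F)) \<le> ennreal (d N)" by (rule ennreal_leI)
      also have "\<dots> \<le> OT_cost c \<eta> \<nu>" using d[OF N(1)] N(2) \<open>\<eta> \<in> K\<close> by auto
      finally show "ennreal (Min (d ` F)) \<le> OT_cost c \<eta> \<nu>" .
    qed
  qed
qed

lemma cost_measurable:
  fixes c :: "'a::topological_space \<Rightarrow> 'a \<Rightarrow> ennreal"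
  assumes "cost_function c" "sets \<pi> = sets (borel :: ('a \<times> 'a) measure)"
  shows "(\<lambda>z. c (fst z) (snd z)) \<in> borel_measurable \<pi>"
proof (rule borel_measurableI_greater)
  fix y
  have sp: "space \<pi> = UNIV" using sets_eq_imp_space_eq[OF assms(2)] by simp
  have "open {z. y < c (fst z) (snd z)}" using assms(1) unfolding cost_function_def by blast
  then show "{x \<in> space \<pi>. y < c (fst x) (snd x)} \<in> sets \<pi>" using sp assms(2) by simp
qed

lemma OT_cost_scale:
  assumes "cost_function c"
  shows "ennreal r * OT_cost c \<eta> \<nu> \<le> OT_cost (\<lambda>x y. ennreal r * c x y) \<eta> \<nu>"
  unfolding OT_cost_def
proof (rule INF_greatest)
  fix \<pi> assume \<pi>: "\<pi> \<in> couplings \<eta> \<nu>"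
  have "ennreal r * (INF \<pi>\<in>couplings \<eta> \<nu>. \<integral>\<^sup>+ z. c (fst z) (snd z) \<partial>\<pi>) \<le> ennreal r * (\<integral>\<^sup>+ z. c (fst z) (snd z) \<partial>\<pi>)"
    by (intro mult_left_mono INF_lower \<pi>) auto
  also have "\<dots> = (\<integral>\<^sup>+ z. ennreal r * c (fst z) (snd z) \<partial>\<pi>)"
    by (rule nn_integral_cmult[symmetric, OF cost_measurable[OF assms]]) (use \<pi> in \<open>simp add: couplings_def\<close>)
  finally show "ennreal r * (INF \<pi>\<in>couplings \<eta> \<nu>. \<integral>\<^sup>+ z. c (fst z) (snd z) \<partial>\<pi>) \<le> (\<integral>\<^sup>+ z. ennreal r * c (fst z) (snd z) \<partial>\<pi>)" .
qed


lemma OT_cost_diag: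
  fixes c :: "'a::second_countable_topology \<Rightarrow> 'a \<Rightarrow> ennreal"
  assumes cf: "cost_function c" and c0: "\<And>x. c x x = 0" and \<nu>: "\<nu> \<in> Prob"
  shows "OT_cost c \<nu> \<nu> = 0"
proof -
  interpret prob_space \<nu> using Prob_D[OF \<nu>] by simp
  have sv: "sets \<nu> = sets borel" using Prob_D[OF \<nu>] by simp
  have cd: "continuous_on UNIV (\<lambda>x::'a. (x, x))" by (intro continuous_intros)
  have md: "(\<lambda>x::'a. (x, x)) \<in> measurable \<nu> borel"
    using borel_measurable_continuous_onI[OF cd] measurable_cong_sets[OF sv refl] by blast
  define \<pi> where "\<pi> = distr \<nu> borel (\<lambda>x::'a. (x, x))"
  have mfst: "fst \<in> measurable (borel :: ('a \<times> 'a) measure) borel"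
    using borel_measurable_continuous_onI[OF continuous_on_fst[OF continuous_on_id]] .
  have msnd: "snd \<in> measurable (borel :: ('a \<times> 'a) measure) borel"
    using borel_measurable_continuous_onI[OF continuous_on_snd[OF continuous_on_id]] .
  have fst_diag: "(fst \<circ> (\<lambda>x::'a. (x, x))) = (\<lambda>x. x)" by (simp add: comp_def)
  have snd_diag: "(snd \<circ> (\<lambda>x::'a. (x, x))) = (\<lambda>x. x)" by (simp add: comp_def)
  have "distr \<pi> borel fst = \<nu>"
    unfolding \<pi>_def distr_distr[OF mfst md] fst_diag by (rule distr_id2[OF sv[symmetric]])
  moreover have "distr \<pi> borel snd = \<nu>"
    unfolding \<pi>_def distr_distr[OF msnd md] snd_diag by (rule distr_id2[OF sv[symmetric]])
  moreover have "prob_space \<pi>" unfolding \<pi>_def by (rule prob_space_distr[OF md])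
  moreover have "sets \<pi> = sets (borel :: ('a \<times> 'a) measure)" unfolding \<pi>_def by simp
  ultimately have \<pi>c: "\<pi> \<in> couplings \<nu> \<nu>" unfolding couplings_def by blast
  have "(\<integral>\<^sup>+ z. c (fst z) (snd z) \<partial>\<pi>) = (\<integral>\<^sup>+ x. c x x \<partial>\<nu>)"
    unfolding \<pi>_def
    by (subst nn_integral_distr[OF md]) (auto intro!: cost_measurable[OF cf])
  also have "\<dots> = 0" using c0 by simp
  finally have "(\<integral>\<^sup>+ z. c (fst z) (snd z) \<partial>\<pi>) = 0" .
  moreover have "OT_cost c \<nu> \<nu> \<le> (\<integral>\<^sup>+ z. c (fst z) (snd z) \<partial>\<pi>)"
    unfolding OT_cost_def by (rule INF_lower[OF \<pi>c])
  ultimately have "OT_cost c \<nu> \<nu> \<le> 0" by simp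
  then show ?thesis by simp
qed

theorem theorem5:
  fixes D :: "'a::polish_space measure \<Rightarrow> 'a measure \<Rightarrow> ennreal"
    and c :: "'a \<Rightarrow> 'a \<Rightarrow> ennreal"
    and \<mu> \<nu> :: "'a measure"
  assumes "pre_divergence D"
    and "cost_function c"
    and "\<mu> \<in> Prob"
    and "lsc_on weak_top (\<lambda>P. D P \<mu>)"
    and "\<forall>a::real. compactin weak_top {P \<in> Prob. D P \<mu> \<le> ennreal a}"
    and "\<forall>x1 x2. c x1 x2 = 0 \<longleftrightarrow> x1 = x2"
    and "\<nu> \<in> Prob"
  shows "((\<lambda>r::real. D_cost D (\<lambda>x y. ennreal r * c x y) \<nu> \<mu>) \<longlongrightarrow> D \<nu> \<mu>) at_top"
proof -
  note cf = assms(2) and c0 = assms(6) and \<nu> = assms(7)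
  have cfr: "cost_function (\<lambda>x y. ennreal r * c x y)" for r
    unfolding cost_function_def
  proof
    fix a
    show "open {z. a < ennreal r * c (fst z) (snd z)}"
    proof (cases "r > 0")
      case True
      have iff: "a < ennreal r * t \<longleftrightarrow> a / ennreal r < t" for t
      proof -
        have "a / ennreal r < t \<longleftrightarrow> a < t * ennreal r" using True by (intro divide_less_ennreal) auto
        moreover have "t * ennreal r = ennreal r * t" by (rule mult.commute)
        ultimately show ?thesis by simp
      qed
      have "{z. a < ennreal r * c (fst z) (snd z)} = {z. a / ennreal r < c (fst z) (snd z)}"
        unfolding iff ..
      then show ?thesis using cf unfolding cost_function_def by simp
    next
      case False
      then have "ennreal r = 0" by (simp add: ennreal_eq_0_iff)
      then show ?thesis by simp
    qed
  qed
  have upper: "D_cost D (\<lambda>x y. ennreal r * c x y) \<nu> \<mu> \<le> D \<nu> \<mu>" for r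
  proof -
    have "OT_cost (\<lambda>x y. ennreal r * c x y) \<nu> \<nu> = 0"
      by (rule OT_cost_diag[OF cfr _ \<nu>]) (use c0 in simp)
    moreover have "D_cost D (\<lambda>x y. ennreal r * c x y) \<nu> \<mu> \<le> D \<nu> \<mu> + OT_cost (\<lambda>x y. ennreal r * c x y) \<nu> \<nu>"
      unfolding D_cost_def by (rule INF_lower[OF \<nu>])
    ultimately show ?thesis by simp
  qed
  show ?thesis
  proof (rule order_tendstoI)
    fix y assume "D \<nu> \<mu> < y"
    then show "eventually (\<lambda>r. D_cost D (\<lambda>x y. ennreal r * c x y) \<nu> \<mu> < y) at_top"
      using upper by (intro always_eventually allI) (rule le_less_trans)
  next
    fix y assume y: "y < D \<nu> \<mu>"
    then obtain b where b: "y < b" "b < D \<nu> \<mu>" using dense by blast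
    then have "b < top" using top.not_eq_extremum by fastforce
    define a where "a = enn2real b"
    have ba: "b = ennreal a" unfolding a_def using \<open>b < top\<close> by simp
    have "0 < b" using b(1) by (rule le_less_trans[OF zero_le])
    then have a0: "a > 0" using ba by simp
    define K where "K = {P \<in> Prob. D P \<mu> \<le> ennreal a}"
    have K: "compactin weak_top K" unfolding K_def using assms(5) by blast
    have nK: "\<nu> \<notin> K" unfolding K_def using b ba by auto
    obtain \<delta> where \<delta>: "\<delta> > 0" "\<forall>\<eta>\<in>K. ennreal \<delta> \<le> OT_cost c \<eta> \<nu>"
      using key_bound[OF cf c0 K \<nu> nK] by blast
    have lowr: "ennreal a \<le> D_cost D (\<lambda>x y. ennreal r * c x y) \<nu> \<mu>" if r: "r \<ge> a / \<delta>" for r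
      unfolding D_cost_def
    proof (rule INF_greatest)
      fix \<eta> :: "'a measure" assume \<eta>: "\<eta> \<in> Prob"
      show "ennreal a \<le> D \<eta> \<mu> + OT_cost (\<lambda>x y. ennreal r * c x y) \<eta> \<nu>"
      proof (cases "\<eta> \<in> K")
        case True
        have ra: "a \<le> r * \<delta>" using r \<delta>(1) by (simp add: field_simps)
        have "0 < r * \<delta>" using ra a0 by linarith
        then have r0: "r \<ge> 0" using \<delta>(1) by (simp add: zero_less_mult_iff)
        have "ennreal a \<le> ennreal (r * \<delta>)" using ra by (rule ennreal_leI)
        also have "\<dots> = ennreal r * ennreal \<delta>" using r0 \<delta>(1) by (simp add: ennreal_mult)
        also have "\<dots> \<le> ennreal r * OT_cost c \<eta> \<nu>" using \<delta>(2) True by (intro mult_left_mono) auto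
        also have "\<dots> \<le> OT_cost (\<lambda>x y. ennreal r * c x y) \<eta> \<nu>" by (rule OT_cost_scale[OF cf])
        also have "\<dots> \<le> D \<eta> \<mu> + OT_cost (\<lambda>x y. ennreal r * c x y) \<eta> \<nu>" by simp
        finally show ?thesis .
      next
        case False
        then have "ennreal a \<le> D \<eta> \<mu>" unfolding K_def using \<eta> by auto
        then show ?thesis by (simp add: add_increasing2)
      qed
    qed
    show "eventually (\<lambda>r. y < D_cost D (\<lambda>x y. ennreal r * c x y) \<nu> \<mu>) at_top"
      unfolding eventually_at_top_linorder
    proof (intro exI[of _ "a / \<delta>"] allI impI)
      fix r assume "a / \<delta> \<le> r"
      from lowr[OF this] have "b \<le> D_cost D (\<lambda>x y. ennreal r * c x y) \<nu> \<mu>" using ba by simp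
      then show "y < D_cost D (\<lambda>x y. ennreal r * c x y) \<nu> \<mu>" using b(1) by (rule less_le_trans[rotated])
    qed
  qed
qed

end
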